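(* Let $X$ be a nonempty set, $\eta\in[0,1)$, $G\subseteq X\times X$ reflexive, symmetric and idempotent ($G\circ G=G$), $\mu$ a finitely additive measure on $\mathcal P(X)$, and $\mu^{\otimes2}$ a finitely additive set function on the product algebra $\mathcal P(X)\otimes\mathcal P(X)$ with $\mu^{\otimes2}(A\times B)=\mu(A)\mu(B)$. Suppose $G$ has finitely many equivalence classes $C_1,\dots,C_m$, that $\mu(C_j)>0$ for all $j$, and that the coupling law $\mu^{\otimes2}((B\times X)\cap G)=\mu(B)+\eta\,\mu^{\otimes2}((B\times X)\cap G)$ holds for all $B\subseteq X$. Then \[\mu(X)=\frac{m}{1-\eta},\qquad \mu^{\otimes2}(G)=\sum_{j=1}^m\mu(C_j)^2=\frac{m}{(1-\eta)^2},\] and $\mu^{\otimes2}((B\times X)\cap G)=\frac{\mu(B)}{1-\eta}$ for every $B\subseteq X$.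
   Context: For relations, $H\circ K=\{(x,z):\exists y\,(x,y)\in H,(y,z)\in K\}$. A finitely additive measure satisfies $\mu(\varnothing)=0$ and additivity on disjoint pairs. The coupling law stated is the coupling law of the axiom system specialized to $R=X$, $I=\varnothing$, $\Pi_R=\mathrm{id}_X$. *)

theory Defs
  imports Complex_Main
begin

inductive_set prod_algebra :: "'a set \<Rightarrow> ('a \<times> 'a) set set" for X :: "'a set" where
  rect: "A \<subseteq> X \<Longrightarrow> B \<subseteq> X \<Longrightarrow> A \<times> B \<in> prod_algebra X"
| compl: "S \<in> prod_algebra X \<Longrightarrow> (X \<times> X) - S \<in> prod_algebra X"
| union: "S \<in> prod_algebra X \<Longrightarrow> T \<in> prod_algebra X \<Longrightarrow> S \<union> T \<in> prod_algebra X"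

definition fin_add_measure :: "'b set set \<Rightarrow> ('b set \<Rightarrow> real) \<Rightarrow> bool" where
  "fin_add_measure M \<mu> \<longleftrightarrow> \<mu> {} = 0 \<and> (\<forall>A\<in>M. 0 \<le> \<mu> A) \<and>
     (\<forall>A\<in>M. \<forall>B\<in>M. A \<inter> B = {} \<longrightarrow> \<mu> (A \<union> B) = \<mu> A + \<mu> B)"

definition fin_add_fun :: "'b set set \<Rightarrow> ('b set \<Rightarrow> real) \<Rightarrow> bool" where
  "fin_add_fun M \<nu> \<longleftrightarrow> \<nu> {} = 0 \<and>
     (\<forall>A\<in>M. \<forall>B\<in>M. A \<inter> B = {} \<longrightarrow> \<nu> (A \<union> B) = \<nu> A + \<nu> B)"

end

theory Submission
  imports Defs
begin

lemma fam_add: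
  assumes m: "fin_add_measure (Pow X) \<mu>"
  shows "finite F \<Longrightarrow> (\<forall>A\<in>F. A \<subseteq> X) \<Longrightarrow> pairwise disjnt F \<Longrightarrow> \<mu> (\<Union>F) = sum \<mu> F"
proof (induction F rule: finite_induct)
  case empty
  then show ?case using m by (simp add: fin_add_measure_def)
next
  case (insert A F)
  have pF: "pairwise disjnt F" using insert.prems(2) by (simp add: pairwise_insert)
  have d: "A \<inter> \<Union>F = {}" using insert.prems(2) insert.hyps(2)
    by (auto simp: pairwise_def disjnt_def)
  have "\<mu> (A \<union> \<Union>F) = \<mu> A + \<mu> (\<Union>F)"
    using m d insert.prems(1) unfolding fin_add_measure_def by blast
  then show ?case using insert pF by simp
qed

theorem corollary5p6:
  fixes X :: "'a set" and \<eta> :: real and G :: "('a \<times> 'a) set"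
    and \<mu> :: "'a set \<Rightarrow> real" and \<mu>2 :: "('a \<times> 'a) set \<Rightarrow> real"
  assumes "X \<noteq> {}"
    and "0 \<le> \<eta>" and "\<eta> < 1"
    and "G \<subseteq> X \<times> X" and "refl_on X G" and "sym G" and "G O G = G"
    and "fin_add_measure (Pow X) \<mu>"
    and "fin_add_fun (prod_algebra X) \<mu>2"
    and "\<And>A B. A \<subseteq> X \<Longrightarrow> B \<subseteq> X \<Longrightarrow> \<mu>2 (A \<times> B) = \<mu> A * \<mu> B"
    and "finite (X // G)"
    and "\<And>C. C \<in> X // G \<Longrightarrow> \<mu> C > 0"
    and "\<And>B. B \<subseteq> X \<Longrightarrow> \<mu>2 ((B \<times> X) \<inter> G) = \<mu> B + \<eta> * \<mu>2 ((B \<times> X) \<inter> G)"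
  shows "\<mu> X = real (card (X // G)) / (1 - \<eta>)
    \<and> \<mu>2 G = (\<Sum>C\<in>X // G. (\<mu> C)^2)
    \<and> (\<Sum>C\<in>X // G. (\<mu> C)^2) = real (card (X // G)) / (1 - \<eta>)^2
    \<and> (\<forall>B. B \<subseteq> X \<longrightarrow> \<mu>2 ((B \<times> X) \<inter> G) = \<mu> B / (1 - \<eta>))"
proof -
  have tr: "trans G" unfolding trans_def using assms(7) by blast
  have eq: "equiv X G" using assms(4,5,6) tr by (simp add: equiv_def)
  have cp: "\<mu>2 ((B \<times> X) \<inter> G) = \<mu> B / (1 - \<eta>)" if "B \<subseteq> X" for B
  proof -
    have "(1 - \<eta>) * \<mu>2 ((B \<times> X) \<inter> G) = \<mu> B" using assms(13)[OF that] by (simp add: algebra_simps)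
    then show ?thesis using assms(3) by (simp add: field_simps)
  qed
  have sub: "C \<subseteq> X" if "C \<in> X // G" for C
    using that eq by (simp add: in_quotient_imp_subset)
  have rect: "(C \<times> X) \<inter> G = C \<times> C" if CQ: "C \<in> X // G" for C
  proof -
    obtain x where x: "x \<in> X" "C = G `` {x}" using CQ unfolding quotient_def by blast
    show ?thesis
    proof (intro equalityI subsetI)
      fix p assume p: "p \<in> (C \<times> X) \<inter> G"
      obtain a b where ab: "p = (a, b)" by (cases p)
      have "(x, a) \<in> G" using p ab x(2) by simp
      moreover have "(a, b) \<in> G" using p ab by simp
      ultimately have "(x, b) \<in> G" by (rule transD[OF tr])
      then show "p \<in> C \<times> C" using p ab x(2) by simp
    next
      fix p assume p: "p \<in> C \<times> C"
      obtain a b where ab: "p = (a, b)" by (cases p)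
      have xa: "(x, a) \<in> G" and xb: "(x, b) \<in> G" using p ab x(2) by simp_all
      have "(a, x) \<in> G" using xa by (rule symD[OF assms(6)])
      then have ag: "(a, b) \<in> G" using xb by (rule transD[OF tr])
      then have "b \<in> X" using assms(4) by blast
      then show "p \<in> (C \<times> X) \<inter> G" using ag ab p by simp
    qed
  qed
  have muC: "\<mu> C = 1 / (1 - \<eta>)" if CQ: "C \<in> X // G" for C
  proof -
    have sC: "C \<subseteq> X" using sub[OF CQ] .
    have h: "\<mu> C * \<mu> C = \<mu> C + \<eta> * (\<mu> C * \<mu> C)"
      using assms(13)[OF sC] rect[OF CQ] assms(10)[OF sC sC] by simp
    have pos: "\<mu> C > 0" using assms(12) CQ by blast
    have "\<mu> C * (\<mu> C - 1 - \<eta> * \<mu> C) = 0" using h by (simp add: algebra_simps)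
    then have "\<mu> C - 1 - \<eta> * \<mu> C = 0" using pos by simp
    then have e: "\<mu> C * (1 - \<eta>) = 1" by (simp add: algebra_simps)
    have "1 - \<eta> \<noteq> 0" using assms(3) by simp
    then show ?thesis using e by (simp add: eq_divide_eq)
  qed
  have "\<mu> X = \<mu> (\<Union>(X // G))" using eq by (simp add: Union_quotient)
  also have "\<dots> = sum \<mu> (X // G)"
    using fam_add[OF assms(8) assms(11)] sub quotient_disj[OF eq]
    by (metis disjnt_def pairwise_def)
  also have "\<dots> = real (card (X // G)) / (1 - \<eta>)" using muC by simp
  finally have mX: "\<mu> X = real (card (X // G)) / (1 - \<eta>)" .
  have sq: "(\<Sum>C\<in>X // G. (\<mu> C)^2) = real (card (X // G)) / (1 - \<eta>)^2"
    using muC by (simp add: power2_eq_square)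
  have "\<mu>2 G = \<mu>2 ((X \<times> X) \<inter> G)" using assms(4) by (simp add: Int_absorb1)
  also have "\<dots> = \<mu> X / (1 - \<eta>)" using cp by simp
  finally have "\<mu>2 G = real (card (X // G)) / (1 - \<eta>)^2" using mX by (simp add: power2_eq_square)
  then show ?thesis using mX sq cp by simp
qed

end
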